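(* Let $(G_1,v_1)$ and $(G_2,v_2)$ be connected graphs with distinguished vertices whose path metrics are conditionally strictly negative definite. Then the path metric on the free product graph $G_1\ast G_2$ is conditionally strictly negative definite.
   Context: For rooted graphs $G_i=(V_i,E_i)$ with roots $v_i$ ($i=1,2$), the free product $G_1\ast G_2$ has vertex set consisting of the empty word $e$ and all words $s_1s_2\cdots s_m$ ($m\geq1$) with $s_k\in V_{i_k}\setminus\{v_{i_k}\}$ and $i_k\neq i_{k+1}$ for all $k$. Its edges are the pairs $\{wu,w'u\}$ where $\{w,w'\}\in E_i$ for some $i$, $u$ is such a word (possibly empty) whose first letter does not lie in $V_i$, and where $wu$ (resp. $w'u$) is read as $u$ if $w=v_i$ (resp. $w'=v_i$). The path metric of a connected graph is the shortest-path distance on its vertex set. A symmetric real function $K$ on $V\times V$ is conditionally strictly negative definite if for every finitely supported $\lambda\colon V\to\mathbb{C}$, $\lambda\neq0$, with $\sum_v\lambda(v)=0$ one has $\sum_{x,y}\lambda(x)\overline{\lambda(y)}K(x,y)<0$. *)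

theory Defs
  imports Complex_Main
begin

definition graph :: "'a set \<Rightarrow> 'a set set \<Rightarrow> bool" where
  "graph V E \<longleftrightarrow> (\<forall>e\<in>E. \<exists>x y. x \<noteq> y \<and> x \<in> V \<and> y \<in> V \<and> e = {x, y})"

definition walk :: "'a set set \<Rightarrow> 'a list \<Rightarrow> bool" where
  "walk E xs \<longleftrightarrow> xs \<noteq> [] \<and> (\<forall>i. Suc i < length xs \<longrightarrow> {xs ! i, xs ! Suc i} \<in> E)"

definition connected_graph :: "'a set \<Rightarrow> 'a set set \<Rightarrow> bool" where
  "connected_graph V E \<longleftrightarrow> V \<noteq> {} \<and>
     (\<forall>x\<in>V. \<forall>y\<in>V. \<exists>xs. walk E xs \<and> hd xs = x \<and> last xs = y)"

definition path_dist :: "'a set set \<Rightarrow> 'a \<Rightarrow> 'a \<Rightarrow> nat" where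
  "path_dist E x y = (LEAST n. \<exists>xs. walk E xs \<and> hd xs = x \<and> last xs = y \<and> length xs = Suc n)"

definition cond_strict_neg_def :: "'a set \<Rightarrow> ('a \<Rightarrow> 'a \<Rightarrow> real) \<Rightarrow> bool" where
  "cond_strict_neg_def V K \<longleftrightarrow>
     (\<forall>x\<in>V. \<forall>y\<in>V. K x y = K y x) \<and>
     (\<forall>lam :: 'a \<Rightarrow> complex.
        finite {x. lam x \<noteq> 0} \<longrightarrow> {x. lam x \<noteq> 0} \<subseteq> V \<longrightarrow> {x. lam x \<noteq> 0} \<noteq> {} \<longrightarrow>
        (\<Sum>x\<in>{x. lam x \<noteq> 0}. lam x) = 0 \<longrightarrow>
        (let q = (\<Sum>x\<in>{x. lam x \<noteq> 0}. \<Sum>y\<in>{x. lam x \<noteq> 0}.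
                    lam x * cnj (lam y) * complex_of_real (K x y))
         in q \<in> \<real> \<and> Re q < 0))"

text \<open>Free product of rooted graphs. Words are lists over Inl (letters of G1) and
  Inr (letters of G2); the empty word is the root e.\<close>
definition fp_vertices :: "'a set \<Rightarrow> 'a \<Rightarrow> 'b set \<Rightarrow> 'b \<Rightarrow> ('a + 'b) list set" where
  "fp_vertices V1 v1 V2 v2 =
     {w. (\<forall>c\<in>set w. case c of Inl s \<Rightarrow> s \<in> V1 - {v1} | Inr s \<Rightarrow> s \<in> V2 - {v2}) \<and>
         (\<forall>k. Suc k < length w \<longrightarrow> isl (w ! k) \<noteq> isl (w ! Suc k))}"

definition prefix1 :: "'a \<Rightarrow> 'a \<Rightarrow> ('a + 'b) list \<Rightarrow> ('a + 'b) list" where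
  "prefix1 v1 w u = (if w = v1 then u else Inl w # u)"

definition prefix2 :: "'b \<Rightarrow> 'b \<Rightarrow> ('a + 'b) list \<Rightarrow> ('a + 'b) list" where
  "prefix2 v2 w u = (if w = v2 then u else Inr w # u)"

definition fp_edges :: "'a set \<Rightarrow> 'a set set \<Rightarrow> 'a \<Rightarrow> 'b set \<Rightarrow> 'b set set \<Rightarrow> 'b
    \<Rightarrow> ('a + 'b) list set set" where
  "fp_edges V1 E1 v1 V2 E2 v2 =
     {{prefix1 v1 w u, prefix1 v1 w' u} | w w' u.
        {w, w'} \<in> E1 \<and> u \<in> fp_vertices V1 v1 V2 v2 \<and> (u = [] \<or> \<not> isl (hd u))}
   \<union> {{prefix2 v2 w u, prefix2 v2 w' u} | w w' u.
        {w, w'} \<in> E2 \<and> u \<in> fp_vertices V1 v1 V2 v2 \<and> (u = [] \<or> isl (hd u))}"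

end

theory Submission imports Defs begin


lemma walk_single[simp]: "walk E [x]" by (simp add: walk_def)

lemma walk_Cons2: "walk E (a # b # rest) \<longleftrightarrow> {a,b} \<in> E \<and> walk E (b # rest)"
proof
  assume w: "walk E (a # b # rest)"
  have "Suc 0 < length (a # b # rest) \<longrightarrow> {(a # b # rest) ! 0, (a # b # rest) ! Suc 0} \<in> E"
    using w unfolding walk_def by blast
  then have "{a,b} \<in> E" by simp
  moreover have "walk E (b # rest)" unfolding walk_def
  proof (intro conjI allI impI)
    fix i assume "Suc i < length (b # rest)"
    then have "Suc (Suc i) < length (a # b # rest)" by simp
    moreover have "Suc (Suc i) < length (a # b # rest) \<longrightarrow> {(a # b # rest) ! Suc i, (a # b # rest) ! Suc (Suc i)} \<in> E"
      using w unfolding walk_def by blast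
    ultimately show "{(b # rest) ! i, (b # rest) ! Suc i} \<in> E" by simp
  qed simp
  ultimately show "{a,b} \<in> E \<and> walk E (b # rest)" by simp
next
  assume h: "{a,b} \<in> E \<and> walk E (b # rest)"
  show "walk E (a # b # rest)" unfolding walk_def
  proof (intro conjI allI impI)
    fix i assume i: "Suc i < length (a # b # rest)"
    show "{(a # b # rest) ! i, (a # b # rest) ! Suc i} \<in> E"
    proof (cases i)
      case 0 then show ?thesis using h by simp
    next
      case (Suc j)
      then have "Suc j < length (b # rest)" using i by simp
      then show ?thesis using h Suc unfolding walk_def by simp
    qed
  qed simp
qed

lemma walk_append:
  "walk E xs \<Longrightarrow> walk E ys \<Longrightarrow> last xs = hd ys \<Longrightarrow> walk E (xs @ tl ys)"
proof (induction xs)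
  case Nil then show ?case by (simp add: walk_def)
next
  case (Cons a xs)
  show ?case
  proof (cases xs)
    case Nil
    then have "ys \<noteq> []" using Cons.prems by (simp add: walk_def)
    then show ?thesis using Cons.prems Nil by (cases ys) auto
  next
    case (Cons b rest)
    then have "{a,b} \<in> E" "walk E xs" using Cons.prems(1) by (simp_all add: walk_Cons2)
    moreover have "last xs = hd ys" using Cons.prems(3) Cons by simp
    ultimately have "walk E (xs @ tl ys)" using Cons.IH Cons.prems(2) by simp
    then show ?thesis using \<open>{a,b} \<in> E\<close> Cons by (simp add: walk_Cons2)
  qed
qed

lemma walk_nonempty: "walk E xs \<Longrightarrow> xs \<noteq> []" by (simp add: walk_def)

lemma path_dist_le:
  assumes "walk E xs" "hd xs = x" "last xs = y"
  shows "path_dist E x y \<le> length xs - 1"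
  unfolding path_dist_def
  apply (rule Least_le)
  using assms walk_nonempty[OF assms(1)] by (intro exI[of _ xs]) auto

lemma path_dist_refl[simp]: "path_dist E x x = 0"
  using path_dist_le[of E "[x]" x x] by simp

lemma path_dist_walk:
  assumes "\<exists>xs. walk E xs \<and> hd xs = x \<and> last xs = y"
  shows "\<exists>xs. walk E xs \<and> hd xs = x \<and> last xs = y \<and> length xs = Suc (path_dist E x y)"
proof -
  from assms obtain xs where xs: "walk E xs" "hd xs = x" "last xs = y" by blast
  then have "\<exists>n xs. walk E xs \<and> hd xs = x \<and> last xs = y \<and> length xs = Suc n"
    using walk_nonempty[OF xs(1)] by (intro exI[of _ "length xs - 1"] exI[of _ xs]) auto
  then show ?thesis unfolding path_dist_def by (rule LeastI_ex)
qed

lemma path_dist_conn: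
  assumes "connected_graph V E" "a \<in> V" "b \<in> V"
  shows "\<exists>xs. walk E xs \<and> hd xs = a \<and> last xs = b \<and> length xs = Suc (path_dist E a b)"
  using assms by (intro path_dist_walk) (auto simp: connected_graph_def)

lemma append_tl_facts:
  assumes "xs \<noteq> []" "ys \<noteq> []" "last xs = hd ys"
  shows "hd (xs @ tl ys) = hd xs" "last (xs @ tl ys) = last ys"
    "length (xs @ tl ys) = length xs + length ys - 1"
  using assms by (cases ys; auto simp: last_append)+

lemma walk_concat:
  assumes "walk E xs" "hd xs = a" "last xs = b" "length xs = Suc m"
    "walk E ys" "hd ys = b" "last ys = c" "length ys = Suc n"
  shows "\<exists>zs. walk E zs \<and> hd zs = a \<and> last zs = c \<and> length zs = Suc (m + n)"
  using assms walk_append[of E xs ys] append_tl_facts[of xs ys] walk_nonempty[of E xs] walk_nonempty[of E ys]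
  by (intro exI[of _ "xs @ tl ys"]) auto

lemma path_dist_tri:
  assumes "connected_graph V E" "a \<in> V" "b \<in> V" "c \<in> V"
  shows "path_dist E a c \<le> path_dist E a b + path_dist E b c"
proof -
  obtain xs where "walk E xs \<and> hd xs = a \<and> last xs = b \<and> length xs = Suc (path_dist E a b)"
    using path_dist_conn assms by metis
  moreover obtain ys where "walk E ys \<and> hd ys = b \<and> last ys = c \<and> length ys = Suc (path_dist E b c)"
    using path_dist_conn assms by metis
  ultimately obtain zs where "walk E zs" "hd zs = a" "last zs = c"
     "length zs = Suc (path_dist E a b + path_dist E b c)"
    using walk_concat by metis
  then show ?thesis using path_dist_le by fastforce
qed

lemma path_dist_edge: "{a,b} \<in> E \<Longrightarrow> path_dist E a b \<le> 1"
  using path_dist_le[of E "[a,b]" a b] by (simp add: walk_Cons2)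



primrec sfx :: "'c list \<Rightarrow> 'c list set" where
  "sfx [] = {[]}"
| "sfx (c # xs) = insert (c # xs) (sfx xs)"

primrec pj1 :: "'a \<Rightarrow> ('a + 'b) list \<Rightarrow> ('a + 'b) list \<Rightarrow> 'a" where
  "pj1 v u [] = v"
| "pj1 v u (c # xs) = (if xs = u then (case c of Inl s \<Rightarrow> s | Inr _ \<Rightarrow> v) else pj1 v u xs)"

primrec pj2 :: "'b \<Rightarrow> ('a + 'b) list \<Rightarrow> ('a + 'b) list \<Rightarrow> 'b" where
  "pj2 v u [] = v"
| "pj2 v u (c # xs) = (if xs = u then (case c of Inr s \<Rightarrow> s | Inl _ \<Rightarrow> v) else pj2 v u xs)"

lemma sfx_finite[simp]: "finite (sfx x)" by (induction x) auto
lemma sfx_self[simp]: "x \<in> sfx x" by (cases x) auto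
lemma sfx_Cons_sub: "sfx xs \<subseteq> sfx (c # xs)" by auto
lemma sfx_len: "u \<in> sfx x \<Longrightarrow> length u \<le> length x" by (induction x) auto

lemma pj1_short: "length x \<le> length u \<Longrightarrow> pj1 v u x = v"
  by (induction x) auto
lemma pj2_short: "length x \<le> length u \<Longrightarrow> pj2 v u x = v"
  by (induction x) auto
lemma pj1_self[simp]: "pj1 v u u = v" by (simp add: pj1_short)
lemma pj2_self[simp]: "pj2 v u u = v" by (simp add: pj2_short)

lemma pj1_notsfx: "u \<notin> sfx x \<Longrightarrow> pj1 v u x = v"
  by (induction x) auto
lemma pj2_notsfx: "u \<notin> sfx x \<Longrightarrow> pj2 v u x = v"
  by (induction x) auto

lemma pj1_form: "pj1 v u y \<noteq> v \<Longrightarrow> \<exists>z. y = z @ Inl (pj1 v u y) # u"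
proof (induction y)
  case Nil then show ?case by simp
next
  case (Cons c xs)
  show ?case
  proof (cases "xs = u")
    case True
    then show ?thesis using Cons.prems by (cases c) auto
  next
    case False
    then obtain z where "xs = z @ Inl (pj1 v u xs) # u" using Cons by auto
    then show ?thesis using False by (intro exI[of _ "c # z"]) simp
  qed
qed

lemma pj2_form: "pj2 v u y \<noteq> v \<Longrightarrow> \<exists>z. y = z @ Inr (pj2 v u y) # u"
proof (induction y)
  case Nil then show ?case by simp
next
  case (Cons c xs)
  show ?case
  proof (cases "xs = u")
    case True
    then show ?thesis using Cons.prems by (cases c) auto
  next
    case False
    then obtain z where "xs = z @ Inr (pj2 v u xs) # u" using Cons by auto
    then show ?thesis using False by (intro exI[of _ "c # z"]) simp
  qed
qed

lemma pj1_in: "(\<forall>c\<in>set y. case c of Inl s \<Rightarrow> s \<in> V | Inr _ \<Rightarrow> True) \<Longrightarrow> v \<in> V \<Longrightarrow> pj1 v u y \<in> V"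
  by (induction y) (auto split: sum.splits)
lemma pj2_in: "(\<forall>c\<in>set y. case c of Inr s \<Rightarrow> s \<in> V | Inl _ \<Rightarrow> True) \<Longrightarrow> v \<in> V \<Longrightarrow> pj2 v u y \<in> V"
  by (induction y) (auto split: sum.splits)

lemma pj1_prefix1: "pj1 v1 u (prefix1 v1 w zz) = (if u = zz then w else pj1 v1 u zz)"
  by (auto simp: prefix1_def)
lemma pj2_prefix1: "pj2 v2 u (prefix1 v1 w zz) = pj2 v2 u zz"
  by (auto simp: prefix1_def)
lemma pj2_prefix2: "pj2 v2 u (prefix2 v2 w zz) = (if u = zz then w else pj2 v2 u zz)"
  by (auto simp: prefix2_def)
lemma pj1_prefix2: "pj1 v1 u (prefix2 v2 w zz) = pj1 v1 u zz"
  by (auto simp: prefix2_def)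

definition DU :: "'a set set \<Rightarrow> 'a \<Rightarrow> 'b set set \<Rightarrow> 'b \<Rightarrow> ('a + 'b) list set
    \<Rightarrow> ('a + 'b) list \<Rightarrow> ('a + 'b) list \<Rightarrow> nat" where
  "DU E1 v1 E2 v2 U x y = (\<Sum>u\<in>U. path_dist E1 (pj1 v1 u x) (pj1 v1 u y) + path_dist E2 (pj2 v2 u x) (pj2 v2 u y))"

definition DD :: "'a set set \<Rightarrow> 'a \<Rightarrow> 'b set set \<Rightarrow> 'b \<Rightarrow> ('a + 'b) list \<Rightarrow> ('a + 'b) list \<Rightarrow> nat" where
  "DD E1 v1 E2 v2 x y = DU E1 v1 E2 v2 (sfx x \<union> sfx y) x y"

lemma DU_refl[simp]: "DU E1 v1 E2 v2 U x x = 0" by (simp add: DU_def)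

lemma DU_indep:
  assumes "finite U" "sfx x \<union> sfx y \<subseteq> U"
  shows "DU E1 v1 E2 v2 U x y = DD E1 v1 E2 v2 x y"
  unfolding DD_def DU_def
  using assms by (intro sum.mono_neutral_right) (auto simp: pj1_notsfx pj2_notsfx)

lemma DU_prefix1:
  assumes "finite U"
  shows "DU E1 v1 E2 v2 U (prefix1 v1 w zz) (prefix1 v1 w' zz) = (if zz \<in> U then path_dist E1 w w' else 0)"
proof -
  have "DU E1 v1 E2 v2 U (prefix1 v1 w zz) (prefix1 v1 w' zz) = (\<Sum>u\<in>U. if u = zz then path_dist E1 w w' else 0)"
    unfolding DU_def by (intro sum.cong) (auto simp: pj1_prefix1 pj2_prefix1)
  then show ?thesis using assms by simp
qed

lemma DU_prefix2:
  assumes "finite U"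
  shows "DU E1 v1 E2 v2 U (prefix2 v2 w zz) (prefix2 v2 w' zz) = (if zz \<in> U then path_dist E2 w w' else 0)"
proof -
  have "DU E1 v1 E2 v2 U (prefix2 v2 w zz) (prefix2 v2 w' zz) = (\<Sum>u\<in>U. if u = zz then path_dist E2 w w' else 0)"
    unfolding DU_def by (intro sum.cong) (auto simp: pj1_prefix2 pj2_prefix2)
  then show ?thesis using assms by simp
qed

lemma pj1_step:
  assumes "x = c # x1" "length y \<le> length x" "\<not> (\<exists>c'. y = c' # x1 \<and> isl c' = isl c)"
  shows "pj1 v u x = pj1 v u x1 \<or> pj1 v u x1 = pj1 v u y"
proof (cases "u = x1")
  case False then show ?thesis using assms by simp
next
  case True
  show ?thesis
  proof (cases "pj1 v u y = v")
    case True then show ?thesis using \<open>u = x1\<close> by simp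
  next
    case False
    then obtain z where z: "y = z @ Inl (pj1 v u y) # u" using pj1_form by metis
    have "length y = length z + Suc (length x1)" using arg_cong[OF z, of length] \<open>u = x1\<close> by simp
    then have "z = []" using assms(1,2) by simp
    then have "y = Inl (pj1 v u y) # x1" using z \<open>u = x1\<close> by simp
    then have "\<not> isl c" using assms(3) by force
    then show ?thesis using assms(1) \<open>u = x1\<close> by (cases c) auto
  qed
qed

lemma pj2_step:
  assumes "x = c # x1" "length y \<le> length x" "\<not> (\<exists>c'. y = c' # x1 \<and> isl c' = isl c)"
  shows "pj2 v u x = pj2 v u x1 \<or> pj2 v u x1 = pj2 v u y"
proof (cases "u = x1")
  case False then show ?thesis using assms by simp
next
  case True
  show ?thesis
  proof (cases "pj2 v u y = v")
    case True then show ?thesis using \<open>u = x1\<close> by simp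
  next
    case False
    then obtain z where z: "y = z @ Inr (pj2 v u y) # u" using pj2_form by metis
    have "length y = length z + Suc (length x1)" using arg_cong[OF z, of length] \<open>u = x1\<close> by simp
    then have "z = []" using assms(1,2) by simp
    then have "y = Inr (pj2 v u y) # x1" using z \<open>u = x1\<close> by simp
    then have "isl c" using assms(3) by force
    then show ?thesis using assms(1) \<open>u = x1\<close> by (cases c) auto
  qed
qed

lemma dist_split:
  assumes "a = b \<or> b = c"
  shows "path_dist E a c = path_dist E a b + path_dist E b c"
    "path_dist E c a = path_dist E c b + path_dist E b a"
  using assms by auto

lemma DU_step:
  assumes "x = c # x1" "length y \<le> length x" "\<not> (\<exists>c'. y = c' # x1 \<and> isl c' = isl c)"
  shows "DU E1 v1 E2 v2 U x y = DU E1 v1 E2 v2 U x x1 + DU E1 v1 E2 v2 U x1 y"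
    "DU E1 v1 E2 v2 U y x = DU E1 v1 E2 v2 U y x1 + DU E1 v1 E2 v2 U x1 x"
proof -
  have h1: "pj1 v1 u x = pj1 v1 u x1 \<or> pj1 v1 u x1 = pj1 v1 u y" for u
    using pj1_step[OF assms] .
  have h2: "pj2 v2 u x = pj2 v2 u x1 \<or> pj2 v2 u x1 = pj2 v2 u y" for u
    using pj2_step[OF assms] .
  show "DU E1 v1 E2 v2 U x y = DU E1 v1 E2 v2 U x x1 + DU E1 v1 E2 v2 U x1 y"
    unfolding DU_def sum.distrib[symmetric]
    by (intro sum.cong refl) (simp add: dist_split(1)[OF h1] dist_split(1)[OF h2])
  show "DU E1 v1 E2 v2 U y x = DU E1 v1 E2 v2 U y x1 + DU E1 v1 E2 v2 U x1 x"
    unfolding DU_def sum.distrib[symmetric]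
    by (intro sum.cong refl) (simp add: dist_split(2)[OF h1] dist_split(2)[OF h2])
qed



locale fpl =
  fixes V1 :: "'a set" and E1 :: "'a set set" and v1 :: 'a
    and V2 :: "'b set" and E2 :: "'b set set" and v2 :: 'b
  assumes g1: "graph V1 E1" and c1: "connected_graph V1 E1" and r1: "v1 \<in> V1"
    and g2: "graph V2 E2" and c2: "connected_graph V2 E2" and r2: "v2 \<in> V2"
begin

abbreviation "FP \<equiv> fp_vertices V1 v1 V2 v2"
abbreviation "EE \<equiv> fp_edges V1 E1 v1 V2 E2 v2"
abbreviation "DUx \<equiv> DU E1 v1 E2 v2"
abbreviation "DDx \<equiv> DD E1 v1 E2 v2"

definition lok :: "('a + 'b) list \<Rightarrow> bool" where
  "lok x = (\<forall>c\<in>set x. case c of Inl s \<Rightarrow> s \<in> V1 | Inr t \<Rightarrow> t \<in> V2)"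

lemma edge_in1: "{w,w'} \<in> E1 \<Longrightarrow> w \<in> V1 \<and> w' \<in> V1"
  using g1 unfolding graph_def by (metis doubleton_eq_iff)
lemma edge_in2: "{w,w'} \<in> E2 \<Longrightarrow> w \<in> V2 \<and> w' \<in> V2"
  using g2 unfolding graph_def by (metis doubleton_eq_iff)

lemma fp_lok: "x \<in> FP \<Longrightarrow> lok x"
  unfolding fp_vertices_def lok_def by (auto split: sum.splits)

lemma fp_Cons:
  assumes "c # x1 \<in> FP"
  shows "x1 \<in> FP" "x1 = [] \<or> isl (hd x1) \<noteq> isl c"
    "case c of Inl s \<Rightarrow> s \<in> V1 \<and> s \<noteq> v1 | Inr t \<Rightarrow> t \<in> V2 \<and> t \<noteq> v2"
proof -
  have a: "\<forall>c\<in>set (c # x1). case c of Inl s \<Rightarrow> s \<in> V1 - {v1} | Inr s \<Rightarrow> s \<in> V2 - {v2}"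
    and b: "\<forall>k. Suc k < length (c # x1) \<longrightarrow> isl ((c # x1) ! k) \<noteq> isl ((c # x1) ! Suc k)"
    using assms unfolding fp_vertices_def by auto
  have "\<forall>k. Suc k < length x1 \<longrightarrow> isl (x1 ! k) \<noteq> isl (x1 ! Suc k)"
  proof (intro allI impI)
    fix k assume "Suc k < length x1"
    then have "Suc (Suc k) < length (c # x1)" by simp
    then show "isl (x1 ! k) \<noteq> isl (x1 ! Suc k)" using b by fastforce
  qed
  then show "x1 \<in> FP" using a unfolding fp_vertices_def by auto
  show "x1 = [] \<or> isl (hd x1) \<noteq> isl c"
  proof (cases x1)
    case (Cons d r)
    then have "Suc 0 < length (c # x1)" by simp
    then show ?thesis using b Cons by fastforce
  qed simp
  show "case c of Inl s \<Rightarrow> s \<in> V1 \<and> s \<noteq> v1 | Inr t \<Rightarrow> t \<in> V2 \<and> t \<noteq> v2"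
    using a by (auto split: sum.splits)
qed

lemma lok_prefix1: "w \<in> V1 \<Longrightarrow> lok u \<Longrightarrow> lok (prefix1 v1 w u)"
  unfolding lok_def prefix1_def by auto
lemma lok_prefix2: "w \<in> V2 \<Longrightarrow> lok u \<Longrightarrow> lok (prefix2 v2 w u)"
  unfolding lok_def prefix2_def by auto

lemma edge_props:
  assumes "e \<in> EE" "e = {a,b}" "finite U"
  shows "lok a \<and> lok b \<and> DUx U a b \<le> 1"
  using assms(1) unfolding fp_edges_def
proof (elim UnE)
  assume "e \<in> {{prefix1 v1 w u, prefix1 v1 w' u} | w w' u.
        {w, w'} \<in> E1 \<and> u \<in> FP \<and> (u = [] \<or> \<not> isl (hd u))}"
  then obtain w w' u where e: "e = {prefix1 v1 w u, prefix1 v1 w' u}" "{w,w'} \<in> E1" "u \<in> FP" by blast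
  have "{w',w} \<in> E1" using e(2) by (simp add: insert_commute)
  then have d: "path_dist E1 w w' \<le> 1" "path_dist E1 w' w \<le> 1" using e(2) path_dist_edge by auto
  have l: "lok (prefix1 v1 w u)" "lok (prefix1 v1 w' u)"
    using lok_prefix1 edge_in1[OF e(2)] fp_lok[OF e(3)] by auto
  have "(a = prefix1 v1 w u \<and> b = prefix1 v1 w' u) \<or> (a = prefix1 v1 w' u \<and> b = prefix1 v1 w u)"
    using e(1) assms(2) by (auto simp: doubleton_eq_iff)
  then show ?thesis using l d DU_prefix1[OF assms(3)] by auto
next
  assume "e \<in> {{prefix2 v2 w u, prefix2 v2 w' u} | w w' u.
        {w, w'} \<in> E2 \<and> u \<in> FP \<and> (u = [] \<or> isl (hd u))}"
  then obtain w w' u where e: "e = {prefix2 v2 w u, prefix2 v2 w' u}" "{w,w'} \<in> E2" "u \<in> FP" by blast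
  have "{w',w} \<in> E2" using e(2) by (simp add: insert_commute)
  then have d: "path_dist E2 w w' \<le> 1" "path_dist E2 w' w \<le> 1" using e(2) path_dist_edge by auto
  have l: "lok (prefix2 v2 w u)" "lok (prefix2 v2 w' u)"
    using lok_prefix2 edge_in2[OF e(2)] fp_lok[OF e(3)] by auto
  have "(a = prefix2 v2 w u \<and> b = prefix2 v2 w' u) \<or> (a = prefix2 v2 w' u \<and> b = prefix2 v2 w u)"
    using e(1) assms(2) by (auto simp: doubleton_eq_iff)
  then show ?thesis using l d DU_prefix2[OF assms(3)] by auto
qed

lemma DU_tri:
  assumes "lok x" "lok y" "lok z"
  shows "DUx U x z \<le> DUx U x y + DUx U y z"
proof -
  have l1: "\<forall>c\<in>set w. case c of Inl s \<Rightarrow> s \<in> V1 | Inr _ \<Rightarrow> True" if "lok w" for w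
    using that unfolding lok_def by (auto split: sum.splits)
  have l2: "\<forall>c\<in>set w. case c of Inr s \<Rightarrow> s \<in> V2 | Inl _ \<Rightarrow> True" if "lok w" for w
    using that unfolding lok_def by (auto split: sum.splits)
  have p1: "pj1 v1 u w \<in> V1" if "lok w" for u w using pj1_in[OF l1[OF that] r1] .
  have p2: "pj2 v2 u w \<in> V2" if "lok w" for u w using pj2_in[OF l2[OF that] r2] .
  show ?thesis unfolding DU_def sum.distrib[symmetric]
  proof (rule sum_mono)
    fix u
    have "path_dist E1 (pj1 v1 u x) (pj1 v1 u z) \<le> path_dist E1 (pj1 v1 u x) (pj1 v1 u y) + path_dist E1 (pj1 v1 u y) (pj1 v1 u z)"
      using path_dist_tri[OF c1] p1 assms by blast
    moreover have "path_dist E2 (pj2 v2 u x) (pj2 v2 u z) \<le> path_dist E2 (pj2 v2 u x) (pj2 v2 u y) + path_dist E2 (pj2 v2 u y) (pj2 v2 u z)"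
      using path_dist_tri[OF c2] p2 assms by blast
    ultimately show "path_dist E1 (pj1 v1 u x) (pj1 v1 u z) + path_dist E2 (pj2 v2 u x) (pj2 v2 u z)
      \<le> path_dist E1 (pj1 v1 u x) (pj1 v1 u y) + path_dist E2 (pj2 v2 u x) (pj2 v2 u y) +
         (path_dist E1 (pj1 v1 u y) (pj1 v1 u z) + path_dist E2 (pj2 v2 u y) (pj2 v2 u z))"
      by simp
  qed
qed

lemma lower:
  "walk EE ws \<Longrightarrow> lok (hd ws) \<Longrightarrow> finite U \<Longrightarrow> DUx U (hd ws) (last ws) \<le> length ws - 1"
proof (induction ws)
  case Nil then show ?case by (simp add: walk_def)
next
  case (Cons a ws)
  show ?case
  proof (cases ws)
    case Nil then show ?thesis by simp
  next
    case (Cons b rest)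
    then have e: "{a,b} \<in> EE" and w: "walk EE ws" using Cons.prems(1) by (simp_all add: walk_Cons2)
    have ep: "lok a \<and> lok b \<and> DUx U a b \<le> 1" using edge_props[OF e refl Cons.prems(3)] .
    have ih: "DUx U b (last ws) \<le> length ws - 1" using Cons.IH[OF w] ep Cons.prems(3) \<open>ws = b # rest\<close> by simp
    have lw: "lok (last ws)"
    proof -
      have "ws \<noteq> []" using Cons by simp
      then obtain ys y where "ws = ys @ [y]" by (metis rev_exhaust)
      show ?thesis
      proof (cases ys rule: rev_cases)
        case Nil then show ?thesis using \<open>ws = ys @ [y]\<close> \<open>ws = b # rest\<close> ep by simp
      next
        case (snoc zs z)
        then have "walk EE (zs @ [z, y])" using w \<open>ws = ys @ [y]\<close> by simp
        then have "\<forall>i. Suc i < length (zs @ [z, y]) \<longrightarrow> {(zs @ [z, y]) ! i, (zs @ [z, y]) ! Suc i} \<in> EE"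
          unfolding walk_def by blast
        then have "{(zs @ [z, y]) ! length zs, (zs @ [z, y]) ! Suc (length zs)} \<in> EE"
          by (erule_tac allE[of _ "length zs"]) simp
        then have "{z, y} \<in> EE" by (simp add: nth_append)
        then show ?thesis using edge_props[OF _ refl Cons.prems(3)] \<open>ws = ys @ [y]\<close> by simp
      qed
    qed
    have "DUx U a (last ws) \<le> DUx U a b + DUx U b (last ws)"
      using DU_tri ep lw by blast
    then show ?thesis using ep ih \<open>ws = b # rest\<close> by simp
  qed
qed

lemma lift1:
  assumes "s \<in> V1" "t \<in> V1" "u0 \<in> FP" "u0 = [] \<or> \<not> isl (hd u0)"
  shows "\<exists>ws. walk EE ws \<and> hd ws = prefix1 v1 s u0 \<and> last ws = prefix1 v1 t u0 \<and> length ws = Suc (path_dist E1 s t)"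
proof -
  obtain xs where xs: "walk E1 xs" "hd xs = s" "last xs = t" "length xs = Suc (path_dist E1 s t)"
    using path_dist_conn[OF c1 assms(1,2)] by blast
  have ne: "xs \<noteq> []" using xs(1) walk_nonempty by blast
  have "walk EE (map (\<lambda>w. prefix1 v1 w u0) xs)"
    unfolding walk_def
  proof (intro conjI allI impI)
    fix i assume i: "Suc i < length (map (\<lambda>w. prefix1 v1 w u0) xs)"
    then have "{xs ! i, xs ! Suc i} \<in> E1" using xs(1) unfolding walk_def by simp
    then have "{prefix1 v1 (xs ! i) u0, prefix1 v1 (xs ! Suc i) u0} \<in> EE"
      using assms(3,4) unfolding fp_edges_def by blast
    then show "{map (\<lambda>w. prefix1 v1 w u0) xs ! i, map (\<lambda>w. prefix1 v1 w u0) xs ! Suc i} \<in> EE"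
      using i by simp
  qed (simp add: ne)
  then show ?thesis using xs ne by (intro exI[of _ "map (\<lambda>w. prefix1 v1 w u0) xs"]) (simp add: hd_map last_map)
qed

lemma lift2:
  assumes "s \<in> V2" "t \<in> V2" "u0 \<in> FP" "u0 = [] \<or> isl (hd u0)"
  shows "\<exists>ws. walk EE ws \<and> hd ws = prefix2 v2 s u0 \<and> last ws = prefix2 v2 t u0 \<and> length ws = Suc (path_dist E2 s t)"
proof -
  obtain xs where xs: "walk E2 xs" "hd xs = s" "last xs = t" "length xs = Suc (path_dist E2 s t)"
    using path_dist_conn[OF c2 assms(1,2)] by blast
  have ne: "xs \<noteq> []" using xs(1) walk_nonempty by blast
  have "walk EE (map (\<lambda>w. prefix2 v2 w u0) xs)"
    unfolding walk_def
  proof (intro conjI allI impI)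
    fix i assume i: "Suc i < length (map (\<lambda>w. prefix2 v2 w u0) xs)"
    then have "{xs ! i, xs ! Suc i} \<in> E2" using xs(1) unfolding walk_def by simp
    then have "{prefix2 v2 (xs ! i) u0, prefix2 v2 (xs ! Suc i) u0} \<in> EE"
      using assms(3,4) unfolding fp_edges_def by blast
    then show "{map (\<lambda>w. prefix2 v2 w u0) xs ! i, map (\<lambda>w. prefix2 v2 w u0) xs ! Suc i} \<in> EE"
      using i by simp
  qed (simp add: ne)
  then show ?thesis using xs ne by (intro exI[of _ "map (\<lambda>w. prefix2 v2 w u0) xs"]) (simp add: hd_map last_map)
qed

end


context fpl begin

lemma walk_du:
  assumes "c # x1 \<in> FP"
  shows "\<exists>ws. walk EE ws \<and> hd ws = c # x1 \<and> last ws = x1 \<and> length ws = Suc (DDx (c # x1) x1)"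
    "\<exists>ws. walk EE ws \<and> hd ws = x1 \<and> last ws = c # x1 \<and> length ws = Suc (DDx x1 (c # x1))"
proof -
  note f = fp_Cons[OF assms]
  have fin: "finite (sfx (c # x1) \<union> sfx x1)" "finite (sfx x1 \<union> sfx (c # x1))" by auto
  have "(\<exists>ws. walk EE ws \<and> hd ws = c # x1 \<and> last ws = x1 \<and> length ws = Suc (DDx (c # x1) x1)) \<and>
    (\<exists>ws. walk EE ws \<and> hd ws = x1 \<and> last ws = c # x1 \<and> length ws = Suc (DDx x1 (c # x1)))"
  proof (cases c)
    case (Inl s)
    then have s: "s \<in> V1" "s \<noteq> v1" using f(3) by auto
    have h: "x1 = [] \<or> \<not> isl (hd x1)" using f(2) Inl by auto
    have e1: "c # x1 = prefix1 v1 s x1" "x1 = prefix1 v1 v1 x1" using Inl s by (auto simp: prefix1_def)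
    have "DDx (c # x1) x1 = path_dist E1 s v1" "DDx x1 (c # x1) = path_dist E1 v1 s"
      unfolding DD_def using DU_prefix1[of "sfx (c # x1) \<union> sfx x1" E1 v1 E2 v2 s x1 v1, OF fin(1)] DU_prefix1[of "sfx x1 \<union> sfx (c # x1)" E1 v1 E2 v2 v1 x1 s, OF fin(2)] Inl s
      by (simp_all add: prefix1_def)
    then show ?thesis using lift1[OF s(1) r1 f(1) h] lift1[OF r1 s(1) f(1) h] e1 by metis
  next
    case (Inr s)
    then have s: "s \<in> V2" "s \<noteq> v2" using f(3) by auto
    have h: "x1 = [] \<or> isl (hd x1)" using f(2) Inr by auto
    have e1: "c # x1 = prefix2 v2 s x1" "x1 = prefix2 v2 v2 x1" using Inr s by (auto simp: prefix2_def)
    have "DDx (c # x1) x1 = path_dist E2 s v2" "DDx x1 (c # x1) = path_dist E2 v2 s"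
      unfolding DD_def using DU_prefix2[of "sfx (c # x1) \<union> sfx x1" E1 v1 E2 v2 s x1 v2, OF fin(1)] DU_prefix2[of "sfx x1 \<union> sfx (c # x1)" E1 v1 E2 v2 v2 x1 s, OF fin(2)] Inr s
      by (simp_all add: prefix2_def)
    then show ?thesis using lift2[OF s(1) r2 f(1) h] lift2[OF r2 s(1) f(1) h] e1 by metis
  qed
  then show "\<exists>ws. walk EE ws \<and> hd ws = c # x1 \<and> last ws = x1 \<and> length ws = Suc (DDx (c # x1) x1)"
    "\<exists>ws. walk EE ws \<and> hd ws = x1 \<and> last ws = c # x1 \<and> length ws = Suc (DDx x1 (c # x1))" by blast+
qed

lemma same_level:
  assumes "c # z \<in> FP" "c' # z \<in> FP" "isl c = isl c'"
  shows "\<exists>ws. walk EE ws \<and> hd ws = c # z \<and> last ws = c' # z \<and> length ws = Suc (DDx (c # z) (c' # z))"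
proof -
  note f = fp_Cons[OF assms(1)] and f' = fp_Cons[OF assms(2)]
  have fin: "finite (sfx (c # z) \<union> sfx (c' # z))" by auto
  have zin: "z \<in> sfx (c # z) \<union> sfx (c' # z)" by simp
  show ?thesis
  proof (cases c)
    case (Inl s)
    then obtain t where t: "c' = Inl t" using assms(3) by (cases c') auto
    have s: "s \<in> V1" "s \<noteq> v1" "t \<in> V1" "t \<noteq> v1" using f(3) f'(3) Inl t by auto
    have h: "z = [] \<or> \<not> isl (hd z)" using f(2) Inl by auto
    have e1: "c # z = prefix1 v1 s z" "c' # z = prefix1 v1 t z" using Inl t s by (auto simp: prefix1_def)
    have "DDx (c # z) (c' # z) = path_dist E1 s t"
      unfolding DD_def using DU_prefix1[of "sfx (c # z) \<union> sfx (c' # z)" E1 v1 E2 v2 s z t, OF fin] Inl t s zin by (simp_all add: prefix1_def)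
    then show ?thesis using lift1[OF s(1) s(3) f(1) h] e1 by metis
  next
    case (Inr s)
    then obtain t where t: "c' = Inr t" using assms(3) by (cases c') auto
    have s: "s \<in> V2" "s \<noteq> v2" "t \<in> V2" "t \<noteq> v2" using f(3) f'(3) Inr t by auto
    have h: "z = [] \<or> isl (hd z)" using f(2) Inr by auto
    have e1: "c # z = prefix2 v2 s z" "c' # z = prefix2 v2 t z" using Inr t s by (auto simp: prefix2_def)
    have "DDx (c # z) (c' # z) = path_dist E2 s t"
      unfolding DD_def using DU_prefix2[of "sfx (c # z) \<union> sfx (c' # z)" E1 v1 E2 v2 s z t, OF fin] Inr t s zin by (simp_all add: prefix2_def)
    then show ?thesis using lift2[OF s(1) s(3) f(1) h] e1 by metis
  qed
qed

lemma upper: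
  "x \<in> FP \<Longrightarrow> y \<in> FP \<Longrightarrow> \<exists>ws. walk EE ws \<and> hd ws = x \<and> last ws = y \<and> length ws = Suc (DDx x y)"
proof (induction "length x + length y" arbitrary: x y rule: less_induct)
  case less
  show ?case
  proof (cases "x = y")
    case True then show ?thesis by (intro exI[of _ "[x]"]) (simp add: DD_def)
  next
    case neq: False
    show ?thesis
    proof (cases "\<exists>c c' z. x = c # z \<and> y = c' # z \<and> isl c = isl c'")
      case True
      then obtain c c' z where xc: "x = c # z" "y = c' # z" "isl c = isl c'" by blast
      have "c # z \<in> FP" "c' # z \<in> FP" using less.prems xc by simp_all
      from same_level[OF this xc(3)] show ?thesis using xc by simp
    next
      case nc: False
      define U where "U = sfx x \<union> sfx y"
      have finU: "finite U" by (simp add: U_def)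
      show ?thesis
      proof (cases "length y \<le> length x")
        case True
        then obtain c x1 where x: "x = c # x1" using neq by (cases x) auto
        have cond: "\<not> (\<exists>c'. y = c' # x1 \<and> isl c' = isl c)" using nc x by blast
        have "DUx U x y = DUx U x x1 + DUx U x1 y" using DU_step(1)[OF x True cond] .
        moreover have "DUx U x y = DDx x y" by (rule DU_indep[OF finU]) (simp add: U_def)
        moreover have "DUx U x x1 = DDx x x1" by (rule DU_indep[OF finU]) (auto simp: U_def x)
        moreover have "DUx U x1 y = DDx x1 y" by (rule DU_indep[OF finU]) (auto simp: U_def x)
        ultimately have dd: "DDx x y = DDx x x1 + DDx x1 y" by simp
        have cx: "c # x1 \<in> FP" using less.prems(1) x by simp
        have x1: "x1 \<in> FP" using fp_Cons(1)[OF cx] .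
        obtain w1 where w1: "walk EE w1" "hd w1 = x" "last w1 = x1" "length w1 = Suc (DDx x x1)"
          using walk_du(1)[OF cx] x by blast
        have "length x1 + length y < length x + length y" using x by simp
        from less.hyps[OF this x1 less.prems(2)]
        obtain w2 where w2: "walk EE w2" "hd w2 = x1" "last w2 = y" "length w2 = Suc (DDx x1 y)"
          by blast
        show ?thesis using walk_concat[OF w1 w2] dd by simp
      next
        case False
        then have le: "length x \<le> length y" by simp
        then obtain c y1 where y: "y = c # y1" using neq False by (cases y) auto
        have cond: "\<not> (\<exists>c'. x = c' # y1 \<and> isl c' = isl c)" using nc y by blast
        have "DUx U x y = DUx U x y1 + DUx U y1 y" using DU_step(2)[OF y le cond] .
        moreover have "DUx U x y = DDx x y" by (rule DU_indep[OF finU]) (simp add: U_def)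
        moreover have "DUx U x y1 = DDx x y1" by (rule DU_indep[OF finU]) (auto simp: U_def y)
        moreover have "DUx U y1 y = DDx y1 y" by (rule DU_indep[OF finU]) (auto simp: U_def y)
        ultimately have dd: "DDx x y = DDx x y1 + DDx y1 y" by simp
        have cy: "c # y1 \<in> FP" using less.prems(2) y by simp
        have y1: "y1 \<in> FP" using fp_Cons(1)[OF cy] .
        obtain w2 where w2: "walk EE w2" "hd w2 = y1" "last w2 = y" "length w2 = Suc (DDx y1 y)"
          using walk_du(2)[OF cy] y by blast
        have "length x + length y1 < length x + length y" using y by simp
        from less.hyps[OF this less.prems(1) y1]
        obtain w1 where w1: "walk EE w1" "hd w1 = x" "last w1 = y1" "length w1 = Suc (DDx x y1)"
          by blast
        show ?thesis using walk_concat[OF w1 w2] dd by simp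
      qed
    qed
  qed
qed

lemma pd_eq:
  assumes "x \<in> FP" "y \<in> FP"
  shows "path_dist EE x y = DDx x y"
proof -
  obtain ws where ws: "walk EE ws" "hd ws = x" "last ws = y" "length ws = Suc (DDx x y)"
    using upper[OF assms] by blast
  have le: "path_dist EE x y \<le> DDx x y" using path_dist_le[OF ws(1-3)] ws(4) by simp
  have "\<exists>xs. walk EE xs \<and> hd xs = x \<and> last xs = y" using ws(1-3) by blast
  from path_dist_walk[OF this]
  obtain ws' where ws': "walk EE ws'" "hd ws' = x" "last ws' = y" "length ws' = Suc (path_dist EE x y)"
    by blast
  have "DUx (sfx x \<union> sfx y) x y \<le> length ws' - 1"
    using lower[OF ws'(1)] ws' fp_lok[OF assms(1)] by simp
  then have "DDx x y \<le> path_dist EE x y" using ws'(4) by (simp add: DD_def)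
  then show ?thesis using le by simp
qed

end


lemma push:
  fixes lam :: "'x \<Rightarrow> complex" and f :: "'x \<Rightarrow> 'v" and K :: "'v \<Rightarrow> 'v \<Rightarrow> real"
  assumes csnd: "cond_strict_neg_def V K" and fin: "finite S" and fS: "f ` S \<subseteq> V"
    and sum0: "(\<Sum>x\<in>S. lam x) = 0"
  defines "Q \<equiv> (\<Sum>x\<in>S. \<Sum>y\<in>S. lam x * cnj (lam y) * complex_of_real (K (f x) (f y)))"
  shows "Q \<in> \<real> \<and> Re Q \<le> 0 \<and> ((\<exists>a. (\<Sum>x\<in>{x\<in>S. f x = a}. lam x) \<noteq> 0) \<longrightarrow> Re Q < 0)"
proof -
  define mu where "mu a = (\<Sum>x\<in>{x\<in>S. f x = a}. lam x)" for a
  define T where "T = f ` S"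
  have finT: "finite T" using fin by (simp add: T_def)
  have inner: "(\<Sum>y\<in>S. lam x * cnj (lam y) * complex_of_real (K (f x) (f y)))
      = (\<Sum>b\<in>T. lam x * cnj (mu b) * complex_of_real (K (f x) b))" for x
  proof -
    have "(\<Sum>y\<in>S. lam x * cnj (lam y) * complex_of_real (K (f x) (f y)))
      = (\<Sum>b\<in>T. \<Sum>y\<in>{y\<in>S. f y = b}. lam x * cnj (lam y) * complex_of_real (K (f x) (f y)))"
      unfolding T_def by (rule sum.image_gen[OF fin])
    also have "\<dots> = (\<Sum>b\<in>T. lam x * cnj (mu b) * complex_of_real (K (f x) b))"
    proof (rule sum.cong[OF refl])
      fix b assume "b \<in> T"
      have "(\<Sum>y\<in>{y\<in>S. f y = b}. lam x * cnj (lam y) * complex_of_real (K (f x) (f y)))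
          = (\<Sum>y\<in>{y\<in>S. f y = b}. lam x * cnj (lam y) * complex_of_real (K (f x) b))"
        by (rule sum.cong) auto
      also have "\<dots> = lam x * cnj (mu b) * complex_of_real (K (f x) b)"
        by (simp add: mu_def sum_distrib_left sum_distrib_right)
      finally show "(\<Sum>y\<in>{y\<in>S. f y = b}. lam x * cnj (lam y) * complex_of_real (K (f x) (f y)))
          = lam x * cnj (mu b) * complex_of_real (K (f x) b)" .
    qed
    finally show ?thesis .
  qed
  have Q2: "Q = (\<Sum>a\<in>T. \<Sum>b\<in>T. mu a * cnj (mu b) * complex_of_real (K a b))"
  proof -
    have "Q = (\<Sum>x\<in>S. \<Sum>b\<in>T. lam x * cnj (mu b) * complex_of_real (K (f x) b))"
      unfolding Q_def using inner by simp
    also have "\<dots> = (\<Sum>a\<in>T. \<Sum>x\<in>{x\<in>S. f x = a}. \<Sum>b\<in>T. lam x * cnj (mu b) * complex_of_real (K (f x) b))"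
      unfolding T_def by (rule sum.image_gen[OF fin])
    also have "\<dots> = (\<Sum>a\<in>T. \<Sum>b\<in>T. mu a * cnj (mu b) * complex_of_real (K a b))"
    proof (rule sum.cong[OF refl])
      fix a assume "a \<in> T"
      have "(\<Sum>x\<in>{x\<in>S. f x = a}. \<Sum>b\<in>T. lam x * cnj (mu b) * complex_of_real (K (f x) b))
         = (\<Sum>x\<in>{x\<in>S. f x = a}. \<Sum>b\<in>T. lam x * cnj (mu b) * complex_of_real (K a b))"
        by (rule sum.cong) auto
      also have "\<dots> = (\<Sum>b\<in>T. \<Sum>x\<in>{x\<in>S. f x = a}. lam x * cnj (mu b) * complex_of_real (K a b))"
        by (rule sum.swap)
      also have "\<dots> = (\<Sum>b\<in>T. mu a * cnj (mu b) * complex_of_real (K a b))"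
        by (simp add: mu_def sum_distrib_right)
      finally show "(\<Sum>x\<in>{x\<in>S. f x = a}. \<Sum>b\<in>T. lam x * cnj (mu b) * complex_of_real (K (f x) b))
         = (\<Sum>b\<in>T. mu a * cnj (mu b) * complex_of_real (K a b))" .
    qed
    finally show ?thesis .
  qed
  define P where "P = {a. mu a \<noteq> 0}"
  have PT: "P \<subseteq> T"
  proof
    fix a assume "a \<in> P"
    have "{x\<in>S. f x = a} \<noteq> {}"
    proof
      assume "{x\<in>S. f x = a} = {}"
      then have "mu a = 0" unfolding mu_def by (simp only: sum.empty)
      then show False using \<open>a \<in> P\<close> by (simp add: P_def)
    qed
    then show "a \<in> T" unfolding T_def by auto
  qed
  have finP: "finite P" using PT finT finite_subset by blast
  have Q3: "Q = (\<Sum>a\<in>P. \<Sum>b\<in>P. mu a * cnj (mu b) * complex_of_real (K a b))"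
  proof -
    have "Q = (\<Sum>a\<in>T. \<Sum>b\<in>P. mu a * cnj (mu b) * complex_of_real (K a b))"
      unfolding Q2 by (intro sum.cong refl sum.mono_neutral_right[OF finT PT]) (auto simp: P_def)
    also have "\<dots> = (\<Sum>a\<in>P. \<Sum>b\<in>P. mu a * cnj (mu b) * complex_of_real (K a b))"
      by (intro sum.mono_neutral_right[OF finT PT]) (auto simp: P_def)
    finally show ?thesis .
  qed
  have summu: "(\<Sum>a\<in>P. mu a) = 0"
  proof -
    have "(\<Sum>a\<in>P. mu a) = (\<Sum>a\<in>T. mu a)"
      by (intro sum.mono_neutral_left[OF finT PT]) (auto simp: P_def)
    also have "\<dots> = (\<Sum>x\<in>S. lam x)" unfolding mu_def T_def by (rule sum.image_gen[OF fin, symmetric])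
    finally show ?thesis using sum0 by simp
  qed
  show ?thesis
  proof (cases "P = {}")
    case True
    then have "Q = 0" using Q3 by simp
    moreover have "\<not> (\<exists>a. mu a \<noteq> 0)" using True by (auto simp: P_def)
    ultimately show ?thesis by (simp add: mu_def)
  next
    case False
    have PV: "{x. mu x \<noteq> 0} \<subseteq> V" using PT fS by (auto simp: P_def T_def)
    have "let q = (\<Sum>x\<in>{x. mu x \<noteq> 0}. \<Sum>y\<in>{x. mu x \<noteq> 0}. mu x * cnj (mu y) * complex_of_real (K x y))
         in q \<in> \<real> \<and> Re q < 0"
      using csnd finP PV False summu unfolding cond_strict_neg_def_def P_def by blast
    then have "Q \<in> \<real> \<and> Re Q < 0" using Q3 by (simp add: Let_def P_def)
    then show ?thesis by simp
  qed
qed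



theorem mainTheorem9:
  fixes V1 :: "'a set" and E1 :: "'a set set" and v1 :: 'a
    and V2 :: "'b set" and E2 :: "'b set set" and v2 :: 'b
  assumes "graph V1 E1" and "connected_graph V1 E1" and "v1 \<in> V1"
    and "graph V2 E2" and "connected_graph V2 E2" and "v2 \<in> V2"
    and "cond_strict_neg_def V1 (\<lambda>x y. real (path_dist E1 x y))"
    and "cond_strict_neg_def V2 (\<lambda>x y. real (path_dist E2 x y))"
  shows "cond_strict_neg_def (fp_vertices V1 v1 V2 v2)
           (\<lambda>x y. real (path_dist (fp_edges V1 E1 v1 V2 E2 v2) x y))"
proof -
  interpret fpl V1 E1 v1 V2 E2 v2 using assms(1-6) by unfold_locales
  have sym1: "path_dist E1 x y = path_dist E1 y x" if "x \<in> V1" "y \<in> V1" for x y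
    using assms(7) that unfolding cond_strict_neg_def_def by auto
  have sym2: "path_dist E2 x y = path_dist E2 y x" if "x \<in> V2" "y \<in> V2" for x y
    using assms(8) that unfolding cond_strict_neg_def_def by auto
  have pin1: "pj1 v1 u x \<in> V1" if "x \<in> FP" for x u
  proof -
    have "\<forall>c\<in>set x. case c of Inl s \<Rightarrow> s \<in> V1 | Inr _ \<Rightarrow> True"
      using fp_lok[OF that] unfolding lok_def by (auto split: sum.splits)
    then show ?thesis using pj1_in[OF _ r1] by blast
  qed
  have pin2: "pj2 v2 u x \<in> V2" if "x \<in> FP" for x u
  proof -
    have "\<forall>c\<in>set x. case c of Inr s \<Rightarrow> s \<in> V2 | Inl _ \<Rightarrow> True"
      using fp_lok[OF that] unfolding lok_def by (auto split: sum.splits)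
    then show ?thesis using pj2_in[OF _ r2] by blast
  qed
  have symD: "path_dist EE x y = path_dist EE y x" if "x \<in> FP" "y \<in> FP" for x y
  proof -
    have "DDx x y = DDx y x" unfolding DD_def DU_def
      by (subst Un_commute, intro sum.cong refl) (simp add: sym1 sym2 pin1 pin2 that)
    then show ?thesis using pd_eq that by simp
  qed
  show ?thesis unfolding cond_strict_neg_def_def
  proof (intro conjI allI impI ballI)
    fix x y assume "x \<in> FP" "y \<in> FP"
    then show "real (path_dist EE x y) = real (path_dist EE y x)" using symD by simp
  next
    fix lam :: "('a + 'b) list \<Rightarrow> complex"
    define S where "S = {x. lam x \<noteq> 0}"
    assume finS: "finite {x. lam x \<noteq> 0}" and subS: "{x. lam x \<noteq> 0} \<subseteq> FP"
      and neS: "{x. lam x \<noteq> 0} \<noteq> {}" and sum0: "(\<Sum>x\<in>{x. lam x \<noteq> 0}. lam x) = 0"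
    then have finS: "finite S" and subS: "S \<subseteq> FP" and neS: "S \<noteq> {}" and sum0: "(\<Sum>x\<in>S. lam x) = 0"
      unfolding S_def by auto
    define U where "U = \<Union>(sfx ` S)"
    have finU: "finite U" using finS by (simp add: U_def)
    define Q1 where "Q1 u = (\<Sum>x\<in>S. \<Sum>y\<in>S. lam x * cnj (lam y) * complex_of_real (real (path_dist E1 (pj1 v1 u x) (pj1 v1 u y))))" for u
    define Q2 where "Q2 u = (\<Sum>x\<in>S. \<Sum>y\<in>S. lam x * cnj (lam y) * complex_of_real (real (path_dist E2 (pj2 v2 u x) (pj2 v2 u y))))" for u
    define F where "F u x y = lam x * cnj (lam y) * complex_of_real (real (path_dist E1 (pj1 v1 u x) (pj1 v1 u y)))
       + lam x * cnj (lam y) * complex_of_real (real (path_dist E2 (pj2 v2 u x) (pj2 v2 u y)))" for u x y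
    have expand: "lam x * cnj (lam y) * complex_of_real (real (path_dist EE x y)) = (\<Sum>u\<in>U. F u x y)"
      if "x \<in> S" "y \<in> S" for x y
    proof -
      have "path_dist EE x y = DDx x y" using pd_eq subS that by blast
      also have "\<dots> = DUx U x y" using that by (intro DU_indep[symmetric] finU) (auto simp: U_def)
      finally show ?thesis
        by (simp add: DU_def F_def of_real_sum sum_distrib_left distrib_left)
    qed
    have QQ: "(\<Sum>x\<in>S. \<Sum>y\<in>S. lam x * cnj (lam y) * complex_of_real (real (path_dist EE x y)))
        = (\<Sum>u\<in>U. Q1 u + Q2 u)"
    proof -
      have "(\<Sum>x\<in>S. \<Sum>y\<in>S. lam x * cnj (lam y) * complex_of_real (real (path_dist EE x y)))
          = (\<Sum>x\<in>S. \<Sum>y\<in>S. \<Sum>u\<in>U. F u x y)"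
        using expand by (intro sum.cong refl) auto
      also have "\<dots> = (\<Sum>x\<in>S. \<Sum>u\<in>U. \<Sum>y\<in>S. F u x y)"
        by (rule sum.cong[OF refl], rule sum.swap)
      also have "\<dots> = (\<Sum>u\<in>U. \<Sum>x\<in>S. \<Sum>y\<in>S. F u x y)"
        by (rule sum.swap)
      also have "\<dots> = (\<Sum>u\<in>U. Q1 u + Q2 u)"
        by (simp add: F_def Q1_def Q2_def sum.distrib)
      finally show ?thesis .
    qed
    have P1: "Q1 u \<in> \<real> \<and> Re (Q1 u) \<le> 0 \<and>
        ((\<exists>a. (\<Sum>x\<in>{x\<in>S. pj1 v1 u x = a}. lam x) \<noteq> 0) \<longrightarrow> Re (Q1 u) < 0)" for u
    proof -
      have fS: "pj1 v1 u ` S \<subseteq> V1" using pin1 subS by blast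
      show ?thesis using push[OF assms(7) finS fS sum0] unfolding Q1_def by simp
    qed
    have P2: "Q2 u \<in> \<real> \<and> Re (Q2 u) \<le> 0 \<and>
        ((\<exists>a. (\<Sum>x\<in>{x\<in>S. pj2 v2 u x = a}. lam x) \<noteq> 0) \<longrightarrow> Re (Q2 u) < 0)" for u
    proof -
      have fS: "pj2 v2 u ` S \<subseteq> V2" using pin2 subS by blast
      show ?thesis using push[OF assms(8) finS fS sum0] unfolding Q2_def by simp
    qed
    obtain x0 where x0: "x0 \<in> S" "\<And>y. y \<in> S \<Longrightarrow> length y \<le> length x0"
    proof -
      define m where "m = Max (length ` S)"
      have "m \<in> length ` S" unfolding m_def using finS neS by (intro Max_in) auto
      then obtain x0 where "x0 \<in> S" "length x0 = m" by blast
      moreover have "length y \<le> m" if "y \<in> S" for y unfolding m_def using finS that by simp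
      ultimately show ?thesis using that by auto
    qed
    have "x0 \<noteq> []"
    proof
      assume "x0 = []"
      then have "S = {[]}" using x0 neS by auto
      then show False using sum0 S_def by auto
    qed
    then obtain c x1 where xc: "x0 = c # x1" by (cases x0) auto
    have x1U: "x1 \<in> U" unfolding U_def by (intro UN_I[OF x0(1)]) (simp add: xc)
    have cFP: "c # x1 \<in> FP" using subS x0(1) xc by auto
    have strict: "Re (Q1 x1 + Q2 x1) < 0"
    proof (cases c)
      case (Inl s)
      have sv: "s \<noteq> v1" using fp_Cons(3)[OF cFP] Inl by simp
      have "{x\<in>S. pj1 v1 x1 x = s} = {x0}"
      proof
        show "{x0} \<subseteq> {x\<in>S. pj1 v1 x1 x = s}" using x0(1) xc Inl by simp
        show "{x\<in>S. pj1 v1 x1 x = s} \<subseteq> {x0}"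
        proof
          fix y assume y: "y \<in> {x\<in>S. pj1 v1 x1 x = s}"
          then have "pj1 v1 x1 y \<noteq> v1" using sv by simp
          then obtain z where z: "y = z @ Inl (pj1 v1 x1 y) # x1" using pj1_form by metis
          have "length y = length z + Suc (length x1)" using arg_cong[OF z, of length] by simp
          moreover have "length y \<le> length x0" using x0(2) y by simp
          ultimately have "z = []" using xc by simp
          then show "y \<in> {x0}" using z y xc Inl by simp
        qed
      qed
      then have "(\<Sum>x\<in>{x\<in>S. pj1 v1 x1 x = s}. lam x) \<noteq> 0" using x0(1) S_def by simp
      then have "Re (Q1 x1) < 0" using P1 by blast
      then show ?thesis using P2[of x1] by simp
    next
      case (Inr s)
      have sv: "s \<noteq> v2" using fp_Cons(3)[OF cFP] Inr by simp
      have "{x\<in>S. pj2 v2 x1 x = s} = {x0}"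
      proof
        show "{x0} \<subseteq> {x\<in>S. pj2 v2 x1 x = s}" using x0(1) xc Inr by simp
        show "{x\<in>S. pj2 v2 x1 x = s} \<subseteq> {x0}"
        proof
          fix y assume y: "y \<in> {x\<in>S. pj2 v2 x1 x = s}"
          then have "pj2 v2 x1 y \<noteq> v2" using sv by simp
          then obtain z where z: "y = z @ Inr (pj2 v2 x1 y) # x1" using pj2_form by metis
          have "length y = length z + Suc (length x1)" using arg_cong[OF z, of length] by simp
          moreover have "length y \<le> length x0" using x0(2) y by simp
          ultimately have "z = []" using xc by simp
          then show "y \<in> {x0}" using z y xc Inr by simp
        qed
      qed
      then have "(\<Sum>x\<in>{x\<in>S. pj2 v2 x1 x = s}. lam x) \<noteq> 0" using x0(1) S_def by simp
      then have "Re (Q2 x1) < 0" using P2 by blast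
      then show ?thesis using P1[of x1] by simp
    qed
    have real: "(\<Sum>u\<in>U. Q1 u + Q2 u) \<in> \<real>" using P1 P2 by (auto intro!: sum_in_Reals)
    have "Re (\<Sum>u\<in>U. Q1 u + Q2 u) = Re (Q1 x1 + Q2 x1) + (\<Sum>u\<in>U - {x1}. Re (Q1 u + Q2 u))"
      by (simp only: sum.remove[OF finU x1U] plus_complex.sel Re_sum)
    also have "\<dots> < 0"
    proof -
      have "(\<Sum>u\<in>U - {x1}. Re (Q1 u + Q2 u)) \<le> 0"
        using P1 P2 by (intro sum_nonpos) (simp add: add_nonpos_nonpos)
      then show ?thesis using strict by simp
    qed
    finally have "Re (\<Sum>u\<in>U. Q1 u + Q2 u) < 0" .
    then show "let q = \<Sum>x\<in>{x. lam x \<noteq> 0}. \<Sum>y\<in>{x. lam x \<noteq> 0}.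
                  lam x * cnj (lam y) * complex_of_real (real (path_dist EE x y))
             in q \<in> \<real> \<and> Re q < 0"
      using QQ real unfolding S_def Let_def by simp
  qed
qed


end
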